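(* Let $f$ be a nonsingular $m$-stage FSR. Suppose $c,d\in\Omega(f)$ (possibly $c=d$), $u\in\Omega_m(c)$ and $u'\in\Omega_m(d)$, where $u'=u\oplus(1,0,\dots,0)$. Then $\min\big(\Omega_m(c)\cup\Omega_m(d)\big)<\min\{u,u'\}$, or $u\in\{(0,0,\dots,0),(1,0,\dots,0)\}$.
   Context: An $m$-stage FSR with feedback logic $f_1:\{0,1\}^m\to\{0,1\}$ has state transformation $F(x_0,\dots,x_{m-1})=(x_1,\dots,x_{m-1},f_1(x_0,\dots,x_{m-1}))$ and generates the binary sequences $s:\mathbb Z\to\{0,1\}$ with $s(t+m)=f_1(s(t),\dots,s(t+m-1))$ for all $t$. It is nonsingular if $F$ is bijective (equivalently all generated sequences are periodic). A periodic sequence $s$ of (least) period $p$ determines the cycle $[s(0),\dots,s(p-1)]$ (all shifts of $s$ give the same cycle), of period $p$. The cycle structure $\Omega(f)$ is the set of cycles of sequences generated by $f$. For a cycle $c$ determined by $s$ with period $p$, $\Omega_k(c)=\{(s(i),s((i+1)\bmod p),\dots,s((i+k-1)\bmod p)): 0\le i<p\}\subseteq\{0,1\}^k$. A vector $(a_0,\dots,a_{m-1})\in\{0,1\}^m$ is identified with the integer $\sum_{j=0}^{m-1}2^ja_j$, which defines the order and $\min$ on $\{0,1\}^m$. *)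

theory Defs
  imports Main
begin

text \<open>Binary vectors in {0,1}^m are bool lists of length m (True = 1).
  An m-stage FSR is given by m and its feedback logic f1 (only its values on
  lists of length m matter).\<close>

definition fsr_state :: "(bool list \<Rightarrow> bool) \<Rightarrow> bool list \<Rightarrow> bool list" where
  "fsr_state f1 x = tl x @ [f1 x]"

definition nonsingular :: "nat \<Rightarrow> (bool list \<Rightarrow> bool) \<Rightarrow> bool" where
  "nonsingular m f1 \<longleftrightarrow> bij_betw (fsr_state f1) {x. length x = m} {x. length x = m}"

definition generates :: "nat \<Rightarrow> (bool list \<Rightarrow> bool) \<Rightarrow> (int \<Rightarrow> bool) \<Rightarrow> bool" where
  "generates m f1 s \<longleftrightarrow>
     (\<forall>t::int. s (t + int m) = f1 (map (\<lambda>j. s (t + int j)) [0..<m]))"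

definition has_period :: "(int \<Rightarrow> bool) \<Rightarrow> nat \<Rightarrow> bool" where
  "has_period s p \<longleftrightarrow> p > 0 \<and> (\<forall>t. s (t + int p) = s t)"

definition least_period :: "(int \<Rightarrow> bool) \<Rightarrow> nat" where
  "least_period s = (LEAST p. has_period s p)"

definition cycle_of :: "(int \<Rightarrow> bool) \<Rightarrow> (int \<Rightarrow> bool) set" where
  "cycle_of s = {(\<lambda>t. s (t + k)) | k. True}"

definition cycle_structure :: "nat \<Rightarrow> (bool list \<Rightarrow> bool) \<Rightarrow> (int \<Rightarrow> bool) set set" where
  "cycle_structure m f1 = {cycle_of s | s. generates m f1 s \<and> (\<exists>p. has_period s p)}"

definition seq_windows :: "nat \<Rightarrow> (int \<Rightarrow> bool) \<Rightarrow> bool list set" where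
  "seq_windows k s = (let p = least_period s in
     {map (\<lambda>j. s (int ((i + j) mod p))) [0..<k] | i. i < p})"

definition Omega_k :: "nat \<Rightarrow> (int \<Rightarrow> bool) set \<Rightarrow> bool list set" where
  "Omega_k k c = seq_windows k (SOME s. s \<in> c)"

definition vec_val :: "bool list \<Rightarrow> nat" where
  "vec_val x = (\<Sum>j<length x. 2 ^ j * (if x ! j then 1 else 0))"

end

theory Submission
  imports Defs
begin

definition Wn :: "nat \<Rightarrow> (int \<Rightarrow> bool) \<Rightarrow> nat \<Rightarrow> bool list" where
  "Wn m s i = map (\<lambda>j. s (int i + int j)) [0..<m]"

lemma per_mult: "has_period s p \<Longrightarrow> s (t + int p * int n) = s t"
proof (induction n)
  case 0 then show ?case by simp
next
  case (Suc n)
  have "s (t + int p * int (Suc n)) = s ((t + int p * int n) + int p)"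
    by (simp add: algebra_simps)
  also have "\<dots> = s (t + int p * int n)" using Suc.prems by (simp add: has_period_def)
  finally show ?case using Suc by simp
qed

lemma per_mod: assumes "has_period s p" shows "s (int (x mod p)) = s (int x)"
proof -
  have "int x = int (x mod p) + int p * int (x div p)"
    by (metis mod_mult_div_eq of_nat_add of_nat_mult add.commute)
  then show ?thesis using per_mult[OF assms, of "int (x mod p)" "x div p"] by simp
qed

lemma seq_windows_char:
  assumes "has_period s p" "p = least_period s"
  shows "seq_windows m s = {Wn m s i | i. i < p}"
proof -
  have "\<And>i. map (\<lambda>j. s (int ((i + j) mod p))) [0..<m] = Wn m s i"
    unfolding Wn_def using per_mod[OF assms(1)] by simp
  then show ?thesis unfolding seq_windows_def Let_def assms(2)[symmetric] by simp
qed

lemma Wn_mod: assumes "has_period s p" shows "Wn m s (i mod p) = Wn m s i"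
proof -
  have "\<And>j. s (int (i mod p) + int j) = s (int i + int j)"
    using per_mod[OF assms, of "i + j" for j] per_mod[OF assms, of "i mod p + j" for j]
    by (metis mod_add_left_eq of_nat_add)
  then show ?thesis unfolding Wn_def by simp
qed

lemma Wn_step:
  assumes "generates m f1 s" "0 < m"
  shows "fsr_state f1 (Wn m s i) = Wn m s (Suc i)"
proof (rule nth_equalityI)
  show "length (fsr_state f1 (Wn m s i)) = length (Wn m s (Suc i))"
    using assms(2) by (simp add: fsr_state_def Wn_def)
next
  fix j assume "j < length (fsr_state f1 (Wn m s i))"
  then have j: "j < m" using assms(2) by (simp add: fsr_state_def Wn_def)
  show "fsr_state f1 (Wn m s i) ! j = Wn m s (Suc i) ! j"
  proof (cases "j < m - 1")
    case True
    have "[0..<m] ! Suc j = Suc j" using True by simp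
    then show ?thesis using j True by (simp add: fsr_state_def Wn_def nth_append nth_tl algebra_simps)
  next
    case False
    then have jm: "j = m - 1" using j by simp
    have "f1 (Wn m s i) = s (int i + int m)"
      using assms(1) unfolding generates_def Wn_def by metis
    then show ?thesis using jm assms(2) by (simp add: fsr_state_def Wn_def nth_append algebra_simps)
  qed
qed

lemma omega_facts:
  assumes "c \<in> cycle_structure m f1" "0 < m"
  shows "finite (Omega_k m c) \<and> (\<forall>w\<in>Omega_k m c. length w = m \<and> fsr_state f1 w \<in> Omega_k m c)"
proof -
  obtain s0 q where c: "c = cycle_of s0" and g0: "generates m f1 s0" and hq: "has_period s0 q"
    using assms(1) unfolding cycle_structure_def by blast
  have "s0 \<in> c" unfolding c cycle_of_def proof -
    have "s0 = (\<lambda>t. s0 (t + 0))" by simp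
    then show "s0 \<in> {\<lambda>t. s0 (t + k) |k. True}" by blast
  qed
  then have "(SOME s. s \<in> c) \<in> c" by (rule someI[of "\<lambda>s. s \<in> c"])
  then obtain k where sdef: "(SOME s. s \<in> c) = (\<lambda>t. s0 (t + k))" unfolding c cycle_of_def by blast
  define s where "s = (\<lambda>t. s0 (t + k))"
  have om: "Omega_k m c = seq_windows m s" unfolding Omega_k_def sdef s_def ..
  have gs: "generates m f1 s" unfolding generates_def s_def
  proof
    fix t
    have "s0 ((t + k) + int m) = f1 (map (\<lambda>j. s0 ((t + k) + int j)) [0..<m])"
      using g0 unfolding generates_def by blast
    moreover have "(t + k) + int m = t + int m + k" by simp
    moreover have "\<And>j. (t + k) + int j = t + int j + k" by simp
    ultimately show "s0 (t + int m + k) = f1 (map (\<lambda>j. s0 (t + int j + k)) [0..<m])" by simp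
  qed
  have "has_period s q" unfolding has_period_def s_def
  proof (intro conjI allI)
    show "0 < q" using hq has_period_def by blast
    fix t
    have "s0 ((t + k) + int q) = s0 (t + k)" using hq unfolding has_period_def by blast
    moreover have "(t + k) + int q = t + int q + k" by simp
    ultimately show "s0 (t + int q + k) = s0 (t + k)" by simp
  qed
  then have hp: "has_period s (least_period s)" unfolding least_period_def by (rule LeastI)
  define p where "p = least_period s"
  have hp': "has_period s p" using hp p_def by simp
  have sw: "Omega_k m c = {Wn m s i | i. i < p}" using om seq_windows_char[OF hp' p_def] by simp
  have "finite (Omega_k m c)" unfolding sw by (rule finite_image_set) simp
  moreover have "\<forall>w\<in>Omega_k m c. length w = m \<and> fsr_state f1 w \<in> Omega_k m c"
  proof
    fix w assume "w \<in> Omega_k m c"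
    then obtain i where w: "w = Wn m s i" "i < p" unfolding sw by blast
    have p0: "p > 0" using hp' has_period_def by blast
    have "fsr_state f1 w = Wn m s (Suc i mod p)" using Wn_step[OF gs assms(2)] Wn_mod[OF hp'] w by simp
    moreover have "Suc i mod p < p" using p0 by simp
    ultimately show "length w = m \<and> fsr_state f1 w \<in> Omega_k m c" unfolding sw w(1) Wn_def by auto
  qed
  ultimately show ?thesis by blast
qed

lemma vec_val_Nil: "vec_val [] = 0" by (simp add: vec_val_def)

lemma vec_val_Cons: "vec_val (a # r) = (if a then 1 else 0) + 2 * vec_val r"
proof -
  have "vec_val (a # r) = (\<Sum>j<Suc (length r). 2 ^ j * (if (a#r) ! j then 1 else 0))"
    by (simp add: vec_val_def)
  also have "\<dots> = (if a then 1 else 0) + (\<Sum>j<length r. 2 ^ Suc j * (if r ! j then 1 else 0))"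
    by (subst sum.lessThan_Suc_shift) simp
  also have "\<dots> = (if a then 1 else 0) + 2 * vec_val r"
    by (simp add: vec_val_def sum_distrib_left mult.assoc)
  finally show ?thesis .
qed

lemma vec_val_snoc: "vec_val (r @ [False]) = vec_val r"
proof -
  have "vec_val (r @ [False]) = (\<Sum>j<Suc (length r). 2 ^ j * (if (r @ [False]) ! j then 1 else 0))"
    by (simp add: vec_val_def)
  also have "\<dots> = (\<Sum>j<length r. 2 ^ j * (if (r @ [False]) ! j then 1 else 0))"
    by (simp add: nth_append)
  also have "\<dots> = vec_val r" unfolding vec_val_def by (rule sum.cong) (auto simp: nth_append)
  finally show ?thesis .
qed

lemma vec_val_zero: "vec_val r = 0 \<Longrightarrow> r = replicate (length r) False"
  by (induction r) (auto simp: vec_val_Cons split: if_splits)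

theorem lemma3:
  fixes m :: nat and f1 :: "bool list \<Rightarrow> bool"
    and c d :: "(int \<Rightarrow> bool) set" and u u' :: "bool list"
  assumes "0 < m"
    and "nonsingular m f1"
    and "c \<in> cycle_structure m f1" and "d \<in> cycle_structure m f1"
    and "u \<in> Omega_k m c" and "u' \<in> Omega_k m d"
    and "u' = map2 (\<noteq>) u (True # replicate (m - 1) False)"
  shows "Min (vec_val ` (Omega_k m c \<union> Omega_k m d)) < min (vec_val u) (vec_val u')
         \<or> u \<in> {replicate m False, True # replicate (m - 1) False}"
proof -
  note fc = omega_facts[OF assms(3,1)] and fd = omega_facts[OF assms(4,1)]
  have lu: "length u = m" using fc assms(5) by blast
  then obtain a r where u: "u = a # r" and lr: "length r = m - 1" using assms(1)
    by (cases u) auto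
  have u': "u' = (\<not> a) # r" using assms(7) u lr by (simp add: map2_map_map[symmetric] zip_replicate2 comp_def)
  show ?thesis
  proof (cases "vec_val r = 0")
    case True
    then have "r = replicate (m - 1) False" using vec_val_zero lr by metis
    then show ?thesis using u assms(1) by (cases a) (auto simp: replicate_Suc[symmetric])
  next
    case False
    have ne: "u \<noteq> u'" using u u' by simp
    have inj: "inj_on (fsr_state f1) {x. length x = m}" using assms(2) unfolding nonsingular_def
      by (rule bij_betw_imp_inj_on)
    have lu': "length u' = m" using u' u lu by simp
    have "fsr_state f1 u \<noteq> fsr_state f1 u'" using inj ne lu lu' by (auto dest: inj_onD)
    then have fne: "f1 u \<noteq> f1 u'" using u u' by (auto simp: fsr_state_def)
    have "\<exists>x\<in>Omega_k m c \<union> Omega_k m d. vec_val x = vec_val r"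
    proof (cases "f1 u")
      case True
      then have "f1 u' = False" using fne by simp
      then have "fsr_state f1 u' = r @ [False]" using u' by (simp add: fsr_state_def)
      then show ?thesis using fd assms(6) vec_val_snoc by (metis UnI2)
    next
      case False
      then have "fsr_state f1 u = r @ [False]" using u by (simp add: fsr_state_def)
      then show ?thesis using fc assms(5) vec_val_snoc by (metis UnI1)
    qed
    then obtain x where x: "x \<in> Omega_k m c \<union> Omega_k m d" "vec_val x = vec_val r" by blast
    have "Min (vec_val ` (Omega_k m c \<union> Omega_k m d)) \<le> vec_val x"
      using fc fd x(1) by (intro Min_le) auto
    moreover have "vec_val r < min (vec_val u) (vec_val u')"
      using False u u' by (simp add: vec_val_Cons)
    ultimately show ?thesis using x(2) by linarith
  qed
qed

end
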